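(* Let $f(x;w)$ be a vanilla fully connected ReLU network, a ResNet, or a DenseNet with i.i.d. standard normal weights, let $x\neq0$, let $W^{\mathbf{k}}$ be any weight matrix of $f$, and let $p>0$. Then $$\mathbb{E}\big[\|J^{\mathbf{k}}\|_2^p\big]=\mathbb{E}\left[\left\|\frac{\partial f_{\mathbf{k}}(x;w)}{\partial W^{\mathbf{k}}}\right\|_2^p\right],$$ where $J^{\mathbf{k}}=\frac{\partial f(x;w)}{\partial W^{\mathbf{k}}}$ and $\|\cdot\|_2$ is the Frobenius norm.
   Context: $\phi(t)=\max(0,t)$. Vanilla: $y^0=\frac{1}{\sqrt{n_0}}W^0x$, $y^l=\sqrt2\phi(\frac{1}{\sqrt{n_{l-1}}}W^ly^{l-1})$, $f=\frac{1}{\sqrt{n_L}}W^{L+1}y^L$. ResNet: $y^0=\frac{1}{\sqrt{n_0}}W^0x$; $y^l=y^{l-1}+\sqrt{\alpha_l}\,y^{l-1,m}$ with $y^{l-1,1}=\frac{1}{\sqrt{n_{l-1}}}W^{l,1}y^{l-1}$, $y^{l-1,h}=\frac{1}{\sqrt{n_{l-1,h-1}}}W^{l,h}q^{l-1,h-1}$ ($1<h\le m$), $q^{l-1,h}=\sqrt2\phi(y^{l-1,h})$, $\alpha_l>0$; $f=\frac{1}{\sqrt{n_L}}W^Ly^L$. DenseNet: $y^0=\frac{1}{\sqrt{n_0}}W^0x$, $y^l=\sqrt{\frac{\alpha}{n_{l-1}l}}\sum_{h=0}^{l-1}W^{l,h}q^h$, $q^h=\sqrt2\phi(y^h)$, $\alpha>0$;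 $f=\frac{1}{\sqrt{n_L}}W^Ly^L$. Dimensions compatible. Path decomposition: $f(x;w)=\sum_{\gamma\in S}c_\gamma z_\gamma\prod_{l=1}^{|\gamma|}w_{\gamma,l}$, where $S$ is the set of input-to-output paths in the computation graph, $w_{\gamma,l}$ the weights along $\gamma$, $c_\gamma$ the constant factors, and $z_\gamma\in\{0,1\}$ the indicator that all ReLUs along $\gamma$ are active at $(x,w)$. With $S_{\mathbf{k}}$ the paths using a weight of $W^{\mathbf{k}}$, $f_{\mathbf{k}}(x;w)=\sum_{\gamma\in S_{\mathbf{k}}}c_\gamma z_\gamma\prod_l w_{\gamma,l}$. Derivatives are taken where they exist (almost everywhere). *)

theory Defs
  imports "HOL-Probability.Probability"
begin

text \<open>Stages are numbered 0,1,...; stage 0 holds the input x, stage nst is the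
 scalar output (coordinate 0).  Each stage s has width dim s; if act s holds, the
 stage feeds its successors through q = sqrt 2 * max 0 y (a ReLU unit), otherwise
 it feeds its raw value.  Weight matrices W^k (k in mats) map stage msrc k to stage
 mdst k with scalar constant mcoef k; W^k has dim (mdst k) rows and dim (msrc k)
 columns.  Skip connections (s,t,c) add c times the output of stage s to stage t.\<close>

record 'k net =
  nst :: nat
  dim :: "nat \<Rightarrow> nat"
  act :: "nat \<Rightarrow> bool"
  mats :: "'k set"
  msrc :: "'k \<Rightarrow> nat"
  mdst :: "'k \<Rightarrow> nat"
  mcoef :: "'k \<Rightarrow> real"
  skips :: "(nat \<times> nat \<times> real) list"

text \<open>Weights: w (k,j,i) is entry (j,i) of W^k.\<close>
type_synonym 'k weights = "'k \<times> nat \<times> nat \<Rightarrow> real"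

definition relu :: "real \<Rightarrow> real" where "relu t = max 0 t"

definition stage_out :: "'k net \<Rightarrow> (nat \<Rightarrow> nat \<Rightarrow> real) \<Rightarrow> nat \<Rightarrow> nat \<Rightarrow> real" where
  "stage_out N v s i = (if act N s then sqrt 2 * relu (v s i) else v s i)"

definition stage_lin :: "'k net \<Rightarrow> 'k weights \<Rightarrow> (nat \<Rightarrow> nat \<Rightarrow> real) \<Rightarrow> nat \<Rightarrow> nat \<Rightarrow> real" where
  "stage_lin N w ov t j =
     (\<Sum>k\<in>mats N. if mdst N k = t \<and> msrc N k < t
        then mcoef N k * (\<Sum>i<dim N (msrc N k). w (k, j, i) * ov (msrc N k) i) else 0)
   + (\<Sum>(s, t', c)\<leftarrow>skips N. if t' = t \<and> s < t then c * ov s j else 0)"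

text \<open>vals N x w t s j is the (pre-activation) value of coordinate j of stage s,
 correct for all s \<le> t.\<close>
primrec vals :: "'k net \<Rightarrow> (nat \<Rightarrow> real) \<Rightarrow> 'k weights \<Rightarrow> nat \<Rightarrow> nat \<Rightarrow> nat \<Rightarrow> real" where
  "vals N x w 0 = (\<lambda>s j. x j)"
| "vals N x w (Suc t) = (\<lambda>s j. if s = Suc t
      then stage_lin N w (stage_out N (vals N x w t)) (Suc t) j
      else vals N x w t s j)"

definition node_val :: "'k net \<Rightarrow> (nat \<Rightarrow> real) \<Rightarrow> 'k weights \<Rightarrow> nat \<Rightarrow> nat \<Rightarrow> real" where
  "node_val N x w s j = vals N x w s s j"

definition net_out :: "'k net \<Rightarrow> (nat \<Rightarrow> real) \<Rightarrow> 'k weights \<Rightarrow> real" where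
  "net_out N x w = node_val N x w (nst N) 0"

text \<open>WE k j i: the edge carrying weight entry (j,i) of W^k, from node (msrc k, i)
 to node (mdst k, j).  SE r c: the r-th skip connection at coordinate c.\<close>
datatype 'k edge = WE 'k nat nat | SE nat nat

fun esrc :: "'k net \<Rightarrow> 'k edge \<Rightarrow> nat \<times> nat" where
  "esrc N (WE k j i) = (msrc N k, i)"
| "esrc N (SE r c) = (fst (skips N ! r), c)"

fun edst :: "'k net \<Rightarrow> 'k edge \<Rightarrow> nat \<times> nat" where
  "edst N (WE k j i) = (mdst N k, j)"
| "edst N (SE r c) = (fst (snd (skips N ! r)), c)"

fun ecoef :: "'k net \<Rightarrow> 'k edge \<Rightarrow> real" where
  "ecoef N (WE k j i) = mcoef N k"
| "ecoef N (SE r c) = snd (snd (skips N ! r))"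

fun eweight :: "'k weights \<Rightarrow> 'k edge \<Rightarrow> real" where
  "eweight w (WE k j i) = w (k, j, i)"
| "eweight w (SE r c) = 1"

fun edge_ok :: "'k net \<Rightarrow> 'k edge \<Rightarrow> bool" where
  "edge_ok N (WE k j i) \<longleftrightarrow> k \<in> mats N \<and> j < dim N (mdst N k) \<and> i < dim N (msrc N k)
      \<and> msrc N k < mdst N k"
| "edge_ok N (SE r c) \<longleftrightarrow> r < length (skips N) \<and> c < dim N (fst (skips N ! r))
      \<and> c < dim N (fst (snd (skips N ! r))) \<and> fst (skips N ! r) < fst (snd (skips N ! r))"

definition is_path :: "'k net \<Rightarrow> 'k edge list \<Rightarrow> bool" where
  "is_path N \<gamma> \<longleftrightarrow> \<gamma> \<noteq> [] \<and> (\<forall>e\<in>set \<gamma>. edge_ok N e)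
     \<and> fst (esrc N (hd \<gamma>)) = 0 \<and> edst N (last \<gamma>) = (nst N, 0)
     \<and> (\<forall>i. Suc i < length \<gamma> \<longrightarrow> edst N (\<gamma> ! i) = esrc N (\<gamma> ! Suc i))"

definition inner_nodes :: "'k net \<Rightarrow> 'k edge list \<Rightarrow> (nat \<times> nat) list" where
  "inner_nodes N \<gamma> = map (edst N) (butlast \<gamma>)"

text \<open>Constant factor c_gamma (includes the input coordinate and the sqrt 2 of each
 ReLU unit), activation indicator z_gamma, and the product of the weights.\<close>
definition path_const :: "'k net \<Rightarrow> (nat \<Rightarrow> real) \<Rightarrow> 'k edge list \<Rightarrow> real" where
  "path_const N x \<gamma> = x (snd (esrc N (hd \<gamma>))) * (\<Prod>e\<leftarrow>\<gamma>. ecoef N e)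
     * (\<Prod>(s, j)\<leftarrow>inner_nodes N \<gamma>. if act N s then sqrt 2 else 1)"

definition path_ind :: "'k net \<Rightarrow> (nat \<Rightarrow> real) \<Rightarrow> 'k weights \<Rightarrow> 'k edge list \<Rightarrow> real" where
  "path_ind N x w \<gamma> = (if \<forall>(s, j)\<in>set (inner_nodes N \<gamma>). act N s \<longrightarrow> node_val N x w s j > 0
     then 1 else 0)"

definition path_weight :: "'k weights \<Rightarrow> 'k edge list \<Rightarrow> real" where
  "path_weight w \<gamma> = (\<Prod>e\<leftarrow>\<gamma>. eweight w e)"

definition uses_mat :: "'k \<Rightarrow> 'k edge list \<Rightarrow> bool" where
  "uses_mat k \<gamma> \<longleftrightarrow> (\<exists>j i. WE k j i \<in> set \<gamma>)"

definition path_fk :: "'k net \<Rightarrow> (nat \<Rightarrow> real) \<Rightarrow> 'k \<Rightarrow> 'k weights \<Rightarrow> real" where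
  "path_fk N x k w = (\<Sum>\<gamma>\<in>{\<gamma>. is_path N \<gamma> \<and> uses_mat k \<gamma>}.
      path_const N x \<gamma> * path_ind N x w \<gamma> * path_weight w \<gamma>)"

definition weight_coords :: "'k net \<Rightarrow> ('k \<times> nat \<times> nat) set" where
  "weight_coords N = {(k, j, i). k \<in> mats N \<and> j < dim N (mdst N k) \<and> i < dim N (msrc N k)}"

definition gauss_weights :: "'k net \<Rightarrow> 'k weights measure" where
  "gauss_weights N = PiM (weight_coords N) (\<lambda>_. density lborel std_normal_density)"

text \<open>Partial derivative w.r.t. one weight entry (where it exists).\<close>
definition pderiv_w :: "('k weights \<Rightarrow> real) \<Rightarrow> 'k weights \<Rightarrow> 'k \<times> nat \<times> nat \<Rightarrow> real" where
  "pderiv_w F w c = deriv (\<lambda>t. F (w(c := t))) (w c)"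

definition frob_grad :: "'k net \<Rightarrow> ('k weights \<Rightarrow> real) \<Rightarrow> 'k \<Rightarrow> 'k weights \<Rightarrow> real" where
  "frob_grad N F k w = sqrt (\<Sum>j<dim N (mdst N k). \<Sum>i<dim N (msrc N k). (pderiv_w F w (k, j, i))\<^sup>2)"

text \<open>Matrix labels: W1 l is W^l, W2 l h is W^{l,h}.\<close>
datatype lbl = W1 nat | W2 nat nat

text \<open>Vanilla net, input dimension d, widths n 0..n L.  Stage 1 = y^0,
 stage l+1 (1<=l<=L) = pre-activation of layer l (its ReLU output is y^l),
 stage L+2 = f.\<close>
definition vanilla_net :: "nat \<Rightarrow> (nat \<Rightarrow> nat) \<Rightarrow> nat \<Rightarrow> lbl net" where
  "vanilla_net d n L = \<lparr> nst = L + 2,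
     dim = (\<lambda>s. if s = 0 then d else if s = L + 2 then 1 else n (s - 1)),
     act = (\<lambda>s. 2 \<le> s \<and> s \<le> L + 1),
     mats = W1 ` {0..L+1},
     msrc = (\<lambda>k. case k of W1 l \<Rightarrow> l | W2 _ _ \<Rightarrow> 0),
     mdst = (\<lambda>k. case k of W1 l \<Rightarrow> l + 1 | W2 _ _ \<Rightarrow> 0),
     mcoef = (\<lambda>k. case k of W1 l \<Rightarrow> (if l = 0 then 1 / sqrt (n 0) else 1 / sqrt (n (l - 1)))
                          | W2 _ _ \<Rightarrow> 0),
     skips = [] \<rparr>"

text \<open>ResNet, input dimension d, width n0 of all y^l (forced equal by the skip
 connections), intermediate widths nn (l-1) h of y^{l-1,h} for 1<=h<m, block depth m,
 block scalings alpha l.  Stage 1 = y^0; stage 1+(l-1)(m+1)+h = y^{l-1,h} (1<=h<=m),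
 stage 1+l(m+1) = y^l; stage 2+L(m+1) = f.\<close>
definition res_ystage :: "nat \<Rightarrow> nat \<Rightarrow> nat" where
  "res_ystage m l = 1 + l * (m + 1)"

definition res_hstage :: "nat \<Rightarrow> nat \<Rightarrow> nat \<Rightarrow> nat" where
  "res_hstage m l h = 1 + (l - 1) * (m + 1) + h"

definition resnet_net :: "nat \<Rightarrow> nat \<Rightarrow> (nat \<Rightarrow> nat \<Rightarrow> nat) \<Rightarrow> nat \<Rightarrow> (nat \<Rightarrow> real) \<Rightarrow> nat \<Rightarrow> lbl net" where
  "resnet_net d n0 nn m \<alpha> L = \<lparr> nst = 2 + L * (m + 1),
     dim = (\<lambda>s. if s = 0 then d else if s = 2 + L * (m + 1) then 1
               else (let r = (s - 1) mod (m + 1); b = (s - 1) div (m + 1) in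
                     if r = 0 \<or> r = m then n0 else nn b r)),
     act = (\<lambda>s. s \<noteq> 0 \<and> s \<noteq> 2 + L * (m + 1) \<and> (s - 1) mod (m + 1) \<noteq> 0
                \<and> (s - 1) mod (m + 1) < m),
     mats = {W1 0, W1 L} \<union> {W2 l h | l h. 1 \<le> l \<and> l \<le> L \<and> 1 \<le> h \<and> h \<le> m},
     msrc = (\<lambda>k. case k of W1 l \<Rightarrow> (if l = 0 then 0 else res_ystage m L)
                 | W2 l h \<Rightarrow> (if h = 1 then res_ystage m (l - 1) else res_hstage m l (h - 1))),
     mdst = (\<lambda>k. case k of W1 l \<Rightarrow> (if l = 0 then 1 else 2 + L * (m + 1))
                 | W2 l h \<Rightarrow> res_hstage m l h),
     mcoef = (\<lambda>k. case k of W1 l \<Rightarrow> 1 / sqrt n0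
                 | W2 l h \<Rightarrow> (if h = 1 then 1 / sqrt n0 else 1 / sqrt (nn (l - 1) (h - 1)))),
     skips = concat (map (\<lambda>l. [(res_ystage m (l - 1), res_ystage m l, 1),
                                (res_hstage m l m, res_ystage m l, sqrt (\<alpha> l))]) [1..<L+1]) \<rparr>"

text \<open>DenseNet, input dimension d, widths n 0..n L.  Stage h+1 = y^h (0<=h<=L),
 fed through its ReLU (q^h) for h<L; stage L+2 = f.\<close>
definition densenet_net :: "nat \<Rightarrow> (nat \<Rightarrow> nat) \<Rightarrow> real \<Rightarrow> nat \<Rightarrow> lbl net" where
  "densenet_net d n \<alpha> L = \<lparr> nst = L + 2,
     dim = (\<lambda>s. if s = 0 then d else if s = L + 2 then 1 else n (s - 1)),
     act = (\<lambda>s. 1 \<le> s \<and> s \<le> L),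
     mats = {W1 0, W1 L} \<union> {W2 l h | l h. 1 \<le> l \<and> l \<le> L \<and> h < l},
     msrc = (\<lambda>k. case k of W1 l \<Rightarrow> (if l = 0 then 0 else L + 1) | W2 l h \<Rightarrow> h + 1),
     mdst = (\<lambda>k. case k of W1 l \<Rightarrow> (if l = 0 then 1 else L + 2) | W2 l h \<Rightarrow> l + 1),
     mcoef = (\<lambda>k. case k of W1 l \<Rightarrow> (if l = 0 then 1 / sqrt (n 0) else 1 / sqrt (n L))
                 | W2 l h \<Rightarrow> sqrt (\<alpha> / (n (l - 1) * l))),
     skips = [] \<rparr>"

end

theory Submission
  imports Defs "HOL-Computational_Algebra.Polynomial"
begin


definition lp :: "(real \<Rightarrow> real) \<Rightarrow> bool" where
 "lp g \<longleftrightarrow> (\<exists>F. countable F \<and> (\<forall>t. t \<notin> F \<longrightarrow> (\<exists>P e. 0 < e \<and> (\<forall>t'. \<bar>t' - t\<bar> < e \<longrightarrow> g t' = poly P t'))))"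

definition pp :: "(real \<Rightarrow> real) \<Rightarrow> bool" where
 "pp g \<longleftrightarrow> lp g \<and> continuous_on UNIV g"

lemma poly_unique_Ioo:
  fixes P Q :: "real poly"
  assumes "a < b" "\<forall>t'. a < t' \<and> t' < b \<longrightarrow> poly P t' = poly Q t'"
  shows "P = Q"
proof -
  have "{a<..<b} \<subseteq> {x. poly (P - Q) x = 0}" using assms(2) by auto
  moreover have "infinite {a<..<b}" using assms(1) by simp
  ultimately have "\<not> finite {x. poly (P - Q) x = 0}" using finite_subset by blast
  then have "P - Q = 0" using poly_roots_finite by blast
  then show ?thesis by simp
qed

lemma roots_countable:
  fixes g :: "real \<Rightarrow> real"
  shows "countable {t. \<exists>P e. 0 < e \<and> (\<forall>t'. \<bar>t' - t\<bar> < e \<longrightarrow> g t' = poly P t') \<and> P \<noteq> 0 \<and> poly P t = 0}"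
proof -
  define R where "R = (\<lambda>(a::real,b::real). {t. a < t \<and> t < b \<and> (\<exists>P. P \<noteq> 0 \<and> (\<forall>t'. a < t' \<and> t' < b \<longrightarrow> g t' = poly P t') \<and> poly P t = 0)})"
  have finR: "finite (R ab)" for ab
  proof (cases ab)
    case (Pair a b)
    show ?thesis
    proof (cases "\<exists>P. P \<noteq> 0 \<and> (\<forall>t'. a < t' \<and> t' < b \<longrightarrow> g t' = poly P t') \<and> a < b")
      case True
      then obtain P0 where P0: "P0 \<noteq> 0" "\<forall>t'. a < t' \<and> t' < b \<longrightarrow> g t' = poly P0 t'" "a < b" by blast
      have "R ab \<subseteq> {t. poly P0 t = 0}"
      proof
        fix t assume "t \<in> R ab"
        then obtain P where P: "a < t" "t < b" "\<forall>t'. a < t' \<and> t' < b \<longrightarrow> g t' = poly P t'" "poly P t = 0"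
          by (auto simp: R_def Pair)
        have "P = P0" using poly_unique_Ioo[OF P0(3)] P(3) P0(2) by metis
        then show "t \<in> {t. poly P0 t = 0}" using P by simp
      qed
      then show ?thesis using poly_roots_finite[OF P0(1)] finite_subset by blast
    next
      case False
      then have "R ab = {}" by (auto simp: R_def Pair)
      then show ?thesis by simp
    qed
  qed
  have "{t. \<exists>P e. 0 < e \<and> (\<forall>t'. \<bar>t' - t\<bar> < e \<longrightarrow> g t' = poly P t') \<and> P \<noteq> 0 \<and> poly P t = 0}
        \<subseteq> (\<Union>ab\<in>\<rat> \<times> \<rat>. R ab)"
  proof
    fix t assume "t \<in> {t. \<exists>P e. 0 < e \<and> (\<forall>t'. \<bar>t' - t\<bar> < e \<longrightarrow> g t' = poly P t') \<and> P \<noteq> 0 \<and> poly P t = 0}"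
    then obtain P e where Pe: "0 < e" "\<forall>t'. \<bar>t' - t\<bar> < e \<longrightarrow> g t' = poly P t'" "P \<noteq> 0" "poly P t = 0" by blast
    obtain a where a: "a \<in> \<rat>" "t - e < a" "a < t" using Rats_dense_in_real[of "t - e" t] Pe(1) by auto
    obtain b where b: "b \<in> \<rat>" "t < b" "b < t + e" using Rats_dense_in_real[of t "t + e"] Pe(1) by auto
    have "\<forall>t'. a < t' \<and> t' < b \<longrightarrow> g t' = poly P t'"
    proof (intro allI impI)
      fix t' assume "a < t' \<and> t' < b"
      then have "\<bar>t' - t\<bar> < e" using a b by linarith
      then show "g t' = poly P t'" using Pe(2) by blast
    qed
    then have "t \<in> R (a, b)" unfolding R_def using a b Pe(3,4) by blast
    then show "t \<in> (\<Union>ab\<in>\<rat> \<times> \<rat>. R ab)" using a b by blast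
  qed
  moreover have "countable (\<Union>ab\<in>\<rat> \<times> \<rat>. R ab)"
  proof (rule countable_UN)
    show "countable (\<rat> \<times> \<rat>)" by (rule countable_SIGMA[OF countable_rat countable_rat])
    show "countable (R ab)" for ab by (rule countable_finite[OF finR])
  qed
  ultimately show ?thesis by (rule countable_subset)
qed

lemma cont_pos_nbhd:
  fixes g :: "real \<Rightarrow> real"
  assumes "continuous_on UNIV g" "g t > 0"
  shows "\<exists>d>0. \<forall>t'. \<bar>t' - t\<bar> < d \<longrightarrow> g t' > 0"
proof -
  from assms(1) obtain d where d: "d > 0" "\<forall>t'. dist t' t < d \<longrightarrow> dist (g t') (g t) < g t"
    unfolding continuous_on_iff using assms(2) by blast
  show ?thesis
  proof (intro exI[of _ d] conjI allI impI)
    fix t' assume "\<bar>t' - t\<bar> < d"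
    then have "dist (g t') (g t) < g t" using d by (simp add: dist_real_def)
    then show "g t' > 0" by (simp add: dist_real_def abs_less_iff)
  qed (use d in auto)
qed

lemma cont_neg_nbhd:
  fixes g :: "real \<Rightarrow> real"
  assumes "continuous_on UNIV g" "g t < 0"
  shows "\<exists>d>0. \<forall>t'. \<bar>t' - t\<bar> < d \<longrightarrow> g t' < 0"
proof -
  have "continuous_on UNIV (\<lambda>t. - g t)" using assms(1) by (intro continuous_intros)
  from cont_pos_nbhd[OF this] assms(2) show ?thesis by auto
qed

lemma pp_const[simp]: "pp (\<lambda>t. c)"
proof -
  have "lp (\<lambda>t. c)" unfolding lp_def
  proof (intro exI[of _ "{}"] conjI allI impI)
    fix t :: real
    show "\<exists>P e. 0 < e \<and> (\<forall>t'. \<bar>t' - t\<bar> < e \<longrightarrow> c = poly P t')"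
      by (rule exI[of _ "[:c:]"], rule exI[of _ 1]) simp
  qed simp
  then show ?thesis unfolding pp_def by simp
qed

lemma pp_id[simp]: "pp (\<lambda>t. t)"
proof -
  have "lp (\<lambda>t. t)" unfolding lp_def
  proof (intro exI[of _ "{}"] conjI allI impI)
    fix t :: real
    show "\<exists>P e. 0 < e \<and> (\<forall>t'. \<bar>t' - t\<bar> < e \<longrightarrow> t' = poly P t')"
      by (rule exI[of _ "[:0,1:]"], rule exI[of _ 1]) simp
  qed simp
  then show ?thesis unfolding pp_def by (simp add: continuous_on_id)
qed

lemma lp_binop:
  assumes "lp f" "lp g"
    and op: "\<And>P Q. \<exists>R. \<forall>t. h (poly P t) (poly Q t) = poly R t"
  shows "lp (\<lambda>t. h (f t) (g t))"
proof -
  obtain F1 where F1: "countable F1" "\<forall>t. t \<notin> F1 \<longrightarrow> (\<exists>P e. 0 < e \<and> (\<forall>t'. \<bar>t' - t\<bar> < e \<longrightarrow> f t' = poly P t'))"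
    using assms(1) unfolding lp_def by blast
  obtain F2 where F2: "countable F2" "\<forall>t. t \<notin> F2 \<longrightarrow> (\<exists>P e. 0 < e \<and> (\<forall>t'. \<bar>t' - t\<bar> < e \<longrightarrow> g t' = poly P t'))"
    using assms(2) unfolding lp_def by blast
  have "\<exists>P e. 0 < e \<and> (\<forall>t'. \<bar>t' - t\<bar> < e \<longrightarrow> h (f t') (g t') = poly P t')" if tF: "t \<notin> F1 \<union> F2" for t
  proof -
    obtain P e1 where P: "0 < e1" "\<forall>t'. \<bar>t' - t\<bar> < e1 \<longrightarrow> f t' = poly P t'" using F1(2) tF by blast
    obtain Q e2 where Q: "0 < e2" "\<forall>t'. \<bar>t' - t\<bar> < e2 \<longrightarrow> g t' = poly Q t'" using F2(2) tF by blast
    obtain R where R: "\<forall>t. h (poly P t) (poly Q t) = poly R t" using op by blast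
    show ?thesis using P Q R by (intro exI[of _ R] exI[of _ "min e1 e2"]) auto
  qed
  then show ?thesis unfolding lp_def using F1(1) F2(1) by blast
qed

lemma pp_add[simp]: assumes "pp f" "pp g" shows "pp (\<lambda>t. f t + g t)"
proof -
  have "lp (\<lambda>t. f t + g t)"
    by (rule lp_binop[of f g "\<lambda>a b. a + b"]) (use assms in \<open>auto simp: pp_def intro: poly_add[symmetric]\<close>)
  moreover have "continuous_on UNIV (\<lambda>t. f t + g t)" using assms unfolding pp_def by (intro continuous_on_add) auto
  ultimately show ?thesis unfolding pp_def by blast
qed

lemma pp_mult[simp]: assumes "pp f" "pp g" shows "pp (\<lambda>t. f t * g t)"
proof -
  have "lp (\<lambda>t. f t * g t)"
    by (rule lp_binop[of f g "\<lambda>a b. a * b"]) (use assms in \<open>auto simp: pp_def intro: poly_mult[symmetric]\<close>)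
  moreover have "continuous_on UNIV (\<lambda>t. f t * g t)" using assms unfolding pp_def by (intro continuous_on_mult) auto
  ultimately show ?thesis unfolding pp_def by blast
qed

lemma pp_sum: "(\<And>i. i \<in> S \<Longrightarrow> pp (f i)) \<Longrightarrow> pp (\<lambda>t. \<Sum>i\<in>S. f i t)"
proof (induction S rule: infinite_finite_induct)
  case (insert x F)
  then show ?case by (simp add: pp_add)
qed simp_all

lemma pp_sum_list: "(\<And>i. i \<in> set xs \<Longrightarrow> pp (\<lambda>t. f t i)) \<Longrightarrow> pp (\<lambda>t. sum_list (map (f t) xs))"
proof (induction xs)
  case (Cons a xs)
  then show ?case using pp_add[of "\<lambda>t. f t a" "\<lambda>t. sum_list (map (f t) xs)"] by simp
qed simp

lemma pp_if: "pp f \<Longrightarrow> pp g \<Longrightarrow> pp (\<lambda>t. if b then f t else g t)"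
  by (cases b) simp_all

lemma pp_relu:
  assumes "pp g"
  shows "pp (\<lambda>t. relu (g t))"
proof -
  have cg: "continuous_on UNIV g" using assms unfolding pp_def by blast
  obtain F where F: "countable F" "\<forall>t. t \<notin> F \<longrightarrow> (\<exists>P e. 0 < e \<and> (\<forall>t'. \<bar>t' - t\<bar> < e \<longrightarrow> g t' = poly P t'))"
    using assms unfolding pp_def lp_def by blast
  define E where "E = {t. \<exists>P e. 0 < e \<and> (\<forall>t'. \<bar>t' - t\<bar> < e \<longrightarrow> g t' = poly P t') \<and> P \<noteq> 0 \<and> poly P t = 0}"
  have cE: "countable E" unfolding E_def by (rule roots_countable)
  have "\<exists>P e. 0 < e \<and> (\<forall>t'. \<bar>t' - t\<bar> < e \<longrightarrow> relu (g t') = poly P t')" if t: "t \<notin> F \<union> E" for t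
  proof -
    obtain P e where Pe: "0 < e" "\<forall>t'. \<bar>t' - t\<bar> < e \<longrightarrow> g t' = poly P t'" using F(2) t by blast
    show ?thesis
    proof (cases "P = 0")
      case True
      then show ?thesis using Pe by (intro exI[of _ 0] exI[of _ e]) (auto simp: relu_def)
    next
      case False
      then have "poly P t \<noteq> 0" using t Pe unfolding E_def by blast
      moreover have gt: "g t = poly P t" using Pe by simp
      ultimately consider "g t > 0" | "g t < 0" by linarith
      then show ?thesis
      proof cases
        case 1
        obtain d where d: "d > 0" "\<forall>t'. \<bar>t' - t\<bar> < d \<longrightarrow> g t' > 0" using cont_pos_nbhd[OF cg 1] by blast
        show ?thesis using d Pe by (intro exI[of _ P] exI[of _ "min d e"]) (auto simp: relu_def)
      next
        case 2
        obtain d where d: "d > 0" "\<forall>t'. \<bar>t' - t\<bar> < d \<longrightarrow> g t' < 0" using cont_neg_nbhd[OF cg 2] by blast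
        show ?thesis using d Pe by (intro exI[of _ 0] exI[of _ "min d e"]) (auto simp: relu_def)
      qed
    qed
  qed
  then have "lp (\<lambda>t. relu (g t))" unfolding lp_def using F(1) cE by blast
  moreover have "continuous_on UNIV (\<lambda>t. relu (g t))" unfolding relu_def using cg by (intro continuous_intros)
  ultimately show ?thesis unfolding pp_def by blast
qed

lemma pp_bad_countable:
  assumes "pp g"
  shows "countable {t. g t \<le> 0 \<and> (\<forall>e>0. \<exists>t'. \<bar>t' - t\<bar> < e \<and> g t' > 0)}"
proof -
  have cg: "continuous_on UNIV g" using assms unfolding pp_def by blast
  obtain F where F: "countable F" "\<forall>t. t \<notin> F \<longrightarrow> (\<exists>P e. 0 < e \<and> (\<forall>t'. \<bar>t' - t\<bar> < e \<longrightarrow> g t' = poly P t'))"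
    using assms unfolding pp_def lp_def by blast
  define E where "E = {t. \<exists>P e. 0 < e \<and> (\<forall>t'. \<bar>t' - t\<bar> < e \<longrightarrow> g t' = poly P t') \<and> P \<noteq> 0 \<and> poly P t = 0}"
  have cE: "countable E" unfolding E_def by (rule roots_countable)
  have "{t. g t \<le> 0 \<and> (\<forall>e>0. \<exists>t'. \<bar>t' - t\<bar> < e \<and> g t' > 0)} \<subseteq> F \<union> E"
  proof
    fix t assume tb: "t \<in> {t. g t \<le> 0 \<and> (\<forall>e>0. \<exists>t'. \<bar>t' - t\<bar> < e \<and> g t' > 0)}"
    show "t \<in> F \<union> E"
    proof (rule ccontr)
      assume t: "t \<notin> F \<union> E"
      obtain P e where Pe: "0 < e" "\<forall>t'. \<bar>t' - t\<bar> < e \<longrightarrow> g t' = poly P t'" using F(2) t by blast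
      show False
      proof (cases "P = 0")
        case True
        then show False using Pe tb by force
      next
        case False
        then have "poly P t \<noteq> 0" using t Pe unfolding E_def by blast
        moreover have gt: "g t = poly P t" using Pe by simp
        ultimately have "g t < 0" using tb by simp
        obtain d where d: "d > 0" "\<forall>t'. \<bar>t' - t\<bar> < d \<longrightarrow> g t' < 0" using cont_neg_nbhd[OF cg \<open>g t < 0\<close>] by blast
        then show False using tb by force
      qed
    qed
  qed
  moreover have "countable (F \<union> E)" using F(1) cE by simp
  ultimately show ?thesis by (rule countable_subset)
qed



lemma vals_stable: "s \<le> T \<Longrightarrow> vals N x w T s j = node_val N x w s j"
proof (induction T)
  case 0 then show ?case by (simp add: node_val_def)
next
  case (Suc T)
  then show ?case by (cases "s = Suc T") (simp_all add: node_val_def)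
qed

lemma pp_vals: "pp (\<lambda>tt. vals N x (w(c := tt)) T s j)"
proof (induction T arbitrary: s j)
  case 0 then show ?case by simp
next
  case (Suc T)
  have ov: "pp (\<lambda>tt. stage_out N (vals N x (w(c := tt)) T) s' i)" for s' i
    unfolding stage_out_def by (intro pp_if pp_mult pp_const pp_relu Suc.IH)
  have wv: "pp (\<lambda>tt. (w(c := tt)) c')" for c'
    unfolding fun_upd_apply by (intro pp_if pp_id pp_const)
  have "pp (\<lambda>tt. stage_lin N (w(c := tt)) (stage_out N (vals N x (w(c := tt)) T)) (Suc T) j)"
    unfolding stage_lin_def
    apply (intro pp_add pp_sum pp_if pp_mult pp_const ov wv)
    apply (rule pp_sum_list)
    apply (auto split: prod.split intro!: pp_if pp_mult pp_const ov)
    done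
  then show ?case unfolding vals.simps by (rule pp_if[OF _ Suc.IH])
qed

lemma pp_node_val: "pp (\<lambda>tt. node_val N x (w(c := tt)) s j)"
  unfolding node_val_def by (rule pp_vals)

lemma meas_vals:
  assumes "\<And>c'. (\<lambda>w. h w c') \<in> borel_measurable M"
  shows "(\<lambda>w. vals N x (h w) T s j) \<in> borel_measurable M"
proof (induction T arbitrary: s j)
  case 0 then show ?case by simp
next
  case (Suc T)
  have ov[measurable]: "(\<lambda>w. stage_out N (vals N x (h w) T) s' i) \<in> borel_measurable M" for s' i
    unfolding stage_out_def relu_def using Suc.IH by measurable
  have wv[measurable]: "(\<lambda>w. h w c') \<in> borel_measurable M" for c' by (rule assms)
  have sl: "(\<lambda>w. sum_list (map (\<lambda>(s, t', c). if t' = Suc T \<and> s < Suc T then c * stage_out N (vals N x (h w) T) s j else 0) xs)) \<in> borel_measurable M" for xs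
    by (induction xs) (auto split: prod.split)
  have "(\<lambda>w. stage_lin N (h w) (stage_out N (vals N x (h w) T)) (Suc T) j) \<in> borel_measurable M"
    unfolding stage_lin_def using sl by measurable
  then show ?case using Suc.IH by simp
qed



definition chain :: "'k net \<Rightarrow> 'k edge list \<Rightarrow> bool" where
  "chain N \<gamma> \<longleftrightarrow> (\<forall>i. Suc i < length \<gamma> \<longrightarrow> edst N (\<gamma> ! i) = esrc N (\<gamma> ! Suc i))"

definition paths_to :: "'k net \<Rightarrow> nat \<Rightarrow> nat \<Rightarrow> 'k edge list set" where
  "paths_to N t j = {\<gamma>. \<gamma> \<noteq> [] \<and> (\<forall>e\<in>set \<gamma>. edge_ok N e) \<and> fst (esrc N (hd \<gamma>)) = 0
     \<and> edst N (last \<gamma>) = (t, j) \<and> chain N \<gamma>}"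

definition pterm :: "'k net \<Rightarrow> (nat \<Rightarrow> real) \<Rightarrow> 'k weights \<Rightarrow> 'k edge list \<Rightarrow> real" where
  "pterm N x w \<gamma> = path_const N x \<gamma> * path_ind N x w \<gamma> * path_weight w \<gamma>"

lemma is_path_paths_to: "is_path N \<gamma> \<longleftrightarrow> \<gamma> \<in> paths_to N (nst N) 0"
  unfolding is_path_def paths_to_def chain_def by blast

lemma chain_snoc: "chain N (\<gamma> @ [e]) \<longleftrightarrow> chain N \<gamma> \<and> (\<gamma> \<noteq> [] \<longrightarrow> edst N (last \<gamma>) = esrc N e)"
proof
  assume c: "chain N (\<gamma> @ [e])"
  have "chain N \<gamma>" unfolding chain_def
  proof (intro allI impI)
    fix i assume "Suc i < length \<gamma>"
    then show "edst N (\<gamma> ! i) = esrc N (\<gamma> ! Suc i)"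
      using c[unfolded chain_def, rule_format, of i] by (simp add: nth_append)
  qed
  moreover have "edst N (last \<gamma>) = esrc N e" if "\<gamma> \<noteq> []"
  proof -
    have "Suc (length \<gamma> - 1) < length (\<gamma> @ [e])" using that by simp
    from c[unfolded chain_def, rule_format, OF this] that show ?thesis
      by (simp add: nth_append last_conv_nth)
  qed
  ultimately show "chain N \<gamma> \<and> (\<gamma> \<noteq> [] \<longrightarrow> edst N (last \<gamma>) = esrc N e)" by blast
next
  assume c: "chain N \<gamma> \<and> (\<gamma> \<noteq> [] \<longrightarrow> edst N (last \<gamma>) = esrc N e)"
  show "chain N (\<gamma> @ [e])" unfolding chain_def
  proof (intro allI impI)
    fix i assume i: "Suc i < length (\<gamma> @ [e])"
    show "edst N ((\<gamma> @ [e]) ! i) = esrc N ((\<gamma> @ [e]) ! Suc i)"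
    proof (cases "Suc i < length \<gamma>")
      case True
      then show ?thesis using c unfolding chain_def by (simp add: nth_append)
    next
      case False
      then have "Suc i = length \<gamma>" using i by simp
      then have ii: "i = length \<gamma> - 1" "\<gamma> \<noteq> []" by auto
      then show ?thesis using c by (simp add: nth_append last_conv_nth)
    qed
  qed
qed

lemma edge_stage: "edge_ok N e \<Longrightarrow> fst (esrc N e) < fst (edst N e)"
  by (cases e) auto

lemma edge_src_dim: "edge_ok N e \<Longrightarrow> snd (esrc N e) < dim N (fst (esrc N e))"
  by (cases e) auto

lemma finite_edges:
  assumes "finite (mats N)"
  shows "finite {e. edge_ok N e}"
proof -
  have "{e. edge_ok N e} \<subseteq> (\<Union>k\<in>mats N. \<Union>j<dim N (mdst N k). \<Union>i<dim N (msrc N k). {WE k j i})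
     \<union> (\<Union>r<length (skips N). \<Union>c<dim N (fst (skips N ! r)). {SE r c})"
  proof
    fix e assume "e \<in> {e. edge_ok N e}"
    then show "e \<in> (\<Union>k\<in>mats N. \<Union>j<dim N (mdst N k). \<Union>i<dim N (msrc N k). {WE k j i})
     \<union> (\<Union>r<length (skips N). \<Union>c<dim N (fst (skips N ! r)). {SE r c})"
      by (cases e) auto
  qed
  moreover have "finite ((\<Union>k\<in>mats N. \<Union>j<dim N (mdst N k). \<Union>i<dim N (msrc N k). {WE k j i})
     \<union> (\<Union>r<length (skips N). \<Union>c<dim N (fst (skips N ! r)). {SE r c}))"
    using assms by simp
  ultimately show ?thesis by (rule finite_subset)
qed

lemma path_len:
  assumes "\<gamma> \<in> paths_to N t j"
  shows "length \<gamma> \<le> t"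
proof -
  have ne: "\<gamma> \<noteq> []" and ok: "\<forall>e\<in>set \<gamma>. edge_ok N e" and h: "fst (esrc N (hd \<gamma>)) = 0"
    and l: "edst N (last \<gamma>) = (t, j)" and c: "chain N \<gamma>" using assms unfolding paths_to_def by auto
  have "i < length \<gamma> \<longrightarrow> Suc i \<le> fst (edst N (\<gamma> ! i))" for i
  proof (induction i)
    case 0
    show ?case
    proof
      assume "0 < length \<gamma>"
      then have "edge_ok N (\<gamma> ! 0)" using ok by simp
      from edge_stage[OF this] h ne show "Suc 0 \<le> fst (edst N (\<gamma> ! 0))" by (simp add: hd_conv_nth)
    qed
  next
    case (Suc i)
    show ?case
    proof
      assume i: "Suc i < length \<gamma>"
      then have "edge_ok N (\<gamma> ! Suc i)" using ok by simp
      from edge_stage[OF this] Suc.IH i c[unfolded chain_def, rule_format, OF i]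
      show "Suc (Suc i) \<le> fst (edst N (\<gamma> ! Suc i))" by simp
    qed
  qed
  from this[of "length \<gamma> - 1"] ne l show ?thesis by (simp add: last_conv_nth)
qed

lemma finite_paths:
  assumes "finite (mats N)"
  shows "finite (paths_to N t j)"
proof -
  have "paths_to N t j \<subseteq> {xs. set xs \<subseteq> {e. edge_ok N e} \<and> length xs \<le> t}"
    using path_len unfolding paths_to_def by blast
  moreover have "finite {xs. set xs \<subseteq> {e. edge_ok N e} \<and> length xs \<le> t}"
    by (rule finite_lists_length_le[OF finite_edges[OF assms]])
  ultimately show ?thesis by (rule finite_subset)
qed

lemma single_in_paths:
  "[e] \<in> paths_to N t j \<longleftrightarrow> edge_ok N e \<and> fst (esrc N e) = 0 \<and> edst N e = (t, j)"
  unfolding paths_to_def chain_def by auto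

lemma snoc_in_paths:
  assumes "\<gamma> \<noteq> []"
  shows "\<gamma> @ [e] \<in> paths_to N t j \<longleftrightarrow>
     \<gamma> \<in> paths_to N (fst (esrc N e)) (snd (esrc N e)) \<and> edge_ok N e \<and> edst N e = (t, j)"
  using assms by (auto simp: paths_to_def chain_snoc)

lemma pterm_single: "pterm N x w [e] = x (snd (esrc N e)) * ecoef N e * eweight w e"
  by (simp add: pterm_def path_const_def path_ind_def path_weight_def inner_nodes_def)

lemma pterm_snoc:
  assumes "\<gamma> \<noteq> []" "edst N (last \<gamma>) = (s, i)"
  shows "pterm N x w (\<gamma> @ [e]) = pterm N x w \<gamma> *
     (ecoef N e * eweight w e * (if act N s then sqrt 2 * (if node_val N x w s i > 0 then 1 else 0) else 1))"
proof -
  have inn: "inner_nodes N (\<gamma> @ [e]) = inner_nodes N \<gamma> @ [(s, i)]"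
  proof -
    have "inner_nodes N (\<gamma> @ [e]) = map (edst N) \<gamma>" by (simp add: inner_nodes_def)
    also have "\<dots> = map (edst N) (butlast \<gamma> @ [last \<gamma>])" using assms(1) by simp
    finally show ?thesis using assms(2) by (simp add: inner_nodes_def)
  qed
  have c: "path_const N x (\<gamma> @ [e]) = path_const N x \<gamma> * ecoef N e * (if act N s then sqrt 2 else 1)"
    using assms(1) by (simp add: path_const_def inn)
  have ind: "path_ind N x w (\<gamma> @ [e]) = path_ind N x w \<gamma> * (if act N s \<longrightarrow> node_val N x w s i > 0 then 1 else 0)"
    by (simp add: path_ind_def inn)
  have wt: "path_weight w (\<gamma> @ [e]) = path_weight w \<gamma> * eweight w e"
    by (simp add: path_weight_def)
  show ?thesis unfolding pterm_def c ind wt by (simp add: algebra_simps)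
qed



lemma sum_list_map_nth: "sum_list (map f xs) = (\<Sum>r<length xs. f (xs ! r))"
  by (simp add: sum_list_sum_nth atLeast0LessThan)

lemma stage_lin_edges:
  fixes N :: "'k net"
  assumes A2: "\<forall>(s, t', c)\<in>set (skips N). s < t' \<longrightarrow> dim N s = dim N t'"
    and fin: "finite (mats N)" and j: "j < dim N t"
  shows "stage_lin N w ov t j = (\<Sum>e\<in>{e. edge_ok N e \<and> edst N e = (t, j)}.
            ecoef N e * eweight w e * ov (fst (esrc N e)) (snd (esrc N e)))"
proof -
  define K where "K = {k \<in> mats N. mdst N k = t \<and> msrc N k < t}"
  define R where "R = {r. r < length (skips N) \<and> fst (snd (skips N ! r)) = t \<and> fst (skips N ! r) < t}"
  define WS where "WS = (\<lambda>(k, i). WE k j i) ` (SIGMA k:K. {..<dim N (msrc N k)})"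
  define SS :: "'k edge set" where "SS = (\<lambda>r. SE r j) ` R"
  let ?F = "\<lambda>e. ecoef N e * eweight w e * ov (fst (esrc N e)) (snd (esrc N e))"
  have finK: "finite K" using fin unfolding K_def by simp
  have finR: "finite R" unfolding R_def by simp
  have eq: "{e. edge_ok N e \<and> edst N e = (t, j)} = WS \<union> SS"
  proof (intro set_eqI iffI)
    fix e assume "e \<in> {e. edge_ok N e \<and> edst N e = (t, j)}"
    then show "e \<in> WS \<union> SS"
    proof (cases e)
      case (WE k j' i)
      then show ?thesis using \<open>e \<in> _\<close> unfolding WS_def K_def by force
    next
      case (SE r c)
      then show ?thesis using \<open>e \<in> _\<close> unfolding SS_def R_def by force
    qed
  next
    fix e assume "e \<in> WS \<union> SS"
    then show "e \<in> {e. edge_ok N e \<and> edst N e = (t, j)}"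
    proof
      assume "e \<in> WS" then show ?thesis using j unfolding WS_def K_def by auto
    next
      assume "e \<in> SS"
      then obtain r where r: "r \<in> R" "e = SE r j" unfolding SS_def by blast
      obtain a b c where abc: "skips N ! r = (a, b, c)" by (cases "skips N ! r") auto
      have "skips N ! r \<in> set (skips N)" using r unfolding R_def by simp
      then have "dim N a = dim N b" using A2 abc r unfolding R_def by auto
      then show ?thesis using r j abc unfolding R_def by auto
    qed
  qed
  have disj: "WS \<inter> SS = {}" unfolding WS_def SS_def by auto
  have finWS: "finite WS" unfolding WS_def using finK by auto
  have finSS: "finite SS" unfolding SS_def using finR by auto
  have sumW: "sum ?F WS = (\<Sum>k\<in>mats N. if mdst N k = t \<and> msrc N k < t
        then mcoef N k * (\<Sum>i<dim N (msrc N k). w (k, j, i) * ov (msrc N k) i) else 0)"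
  proof -
    have inj: "inj_on (\<lambda>(k, i). WE k j i) (SIGMA k:K. {..<dim N (msrc N k)})"
      by (auto simp: inj_on_def)
    have "sum ?F WS = (\<Sum>(k, i)\<in>(SIGMA k:K. {..<dim N (msrc N k)}). ?F (WE k j i))"
      unfolding WS_def by (subst sum.reindex[OF inj]) (simp add: case_prod_beta')
    also have "\<dots> = (\<Sum>k\<in>K. \<Sum>i<dim N (msrc N k). ?F (WE k j i))"
      by (rule sum.Sigma[symmetric]) (use finK in auto)
    also have "\<dots> = (\<Sum>k\<in>K. mcoef N k * (\<Sum>i<dim N (msrc N k). w (k, j, i) * ov (msrc N k) i))"
      by (simp add: sum_distrib_left mult.assoc)
    also have "\<dots> = (\<Sum>k\<in>mats N. if mdst N k = t \<and> msrc N k < t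
        then mcoef N k * (\<Sum>i<dim N (msrc N k). w (k, j, i) * ov (msrc N k) i) else 0)"
      unfolding K_def by (simp add: sum.inter_filter[OF fin])
    finally show ?thesis .
  qed
  have sumS: "sum ?F SS = (\<Sum>(s, t', c)\<leftarrow>skips N. if t' = t \<and> s < t then c * ov s j else 0)"
  proof -
    have inj: "inj_on (\<lambda>r. SE r j) R" by (auto simp: inj_on_def)
    have "sum ?F SS = (\<Sum>r\<in>R. ?F (SE r j))" unfolding SS_def by (rule sum.reindex[OF inj, unfolded comp_def])
    also have "\<dots> = (\<Sum>r\<in>R. (\<lambda>(s, t', c). if t' = t \<and> s < t then c * ov s j else 0) (skips N ! r))"
    proof (rule sum.cong[OF refl])
      fix r assume "r \<in> R"
      then show "?F (SE r j) = (\<lambda>(s, t', c). if t' = t \<and> s < t then c * ov s j else 0) (skips N ! r)"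
        unfolding R_def by (cases "skips N ! r") auto
    qed
    also have "\<dots> = (\<Sum>r<length (skips N). (\<lambda>(s, t', c). if t' = t \<and> s < t then c * ov s j else 0) (skips N ! r))"
    proof -
      have "(\<Sum>r<length (skips N). (\<lambda>(s, t', c). if t' = t \<and> s < t then c * ov s j else 0) (skips N ! r))
         = (\<Sum>r<length (skips N). if r \<in> R then (\<lambda>(s, t', c). if t' = t \<and> s < t then c * ov s j else 0) (skips N ! r) else 0)"
        by (rule sum.cong[OF refl]) (auto simp: R_def split: prod.split)
      also have "\<dots> = (\<Sum>r\<in>R. (\<lambda>(s, t', c). if t' = t \<and> s < t then c * ov s j else 0) (skips N ! r))"
      proof -
        have "{..<length (skips N)} \<inter> R = R" unfolding R_def by auto
        then show ?thesis by (simp only: sum.inter_restrict[OF finite_lessThan, symmetric])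
      qed
      finally show ?thesis by simp
    qed
    also have "\<dots> = (\<Sum>(s, t', c)\<leftarrow>skips N. if t' = t \<and> s < t then c * ov s j else 0)"
      by (rule sum_list_map_nth[symmetric])
    finally show ?thesis .
  qed
  show ?thesis unfolding eq stage_lin_def
    by (subst sum.union_disjoint[OF finWS finSS disj]) (simp add: sumW sumS)
qed



theorem decomp:
  fixes N :: "'k net"
  assumes A1: "\<not> act N 0"
    and A2: "\<forall>(s, t', c)\<in>set (skips N). s < t' \<longrightarrow> dim N s = dim N t'"
    and fin: "finite (mats N)"
  shows "0 < t \<Longrightarrow> j < dim N t \<Longrightarrow> node_val N x w t j = (\<Sum>\<gamma>\<in>paths_to N t j. pterm N x w \<gamma>)"
proof (induction t arbitrary: j rule: less_induct)
  case (less t)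
  obtain T where T: "t = Suc T" using less.prems by (cases t) auto
  let ?ov = "stage_out N (vals N x w T)"
  let ?E = "{e. edge_ok N e \<and> edst N e = (t, j)}"
  have "node_val N x w t j = stage_lin N w ?ov t j" by (simp add: node_val_def T)
  also have "\<dots> = (\<Sum>e\<in>?E. ecoef N e * eweight w e * ?ov (fst (esrc N e)) (snd (esrc N e)))"
    by (rule stage_lin_edges[OF A2 fin less.prems(2)])
  also have "\<dots> = (\<Sum>e\<in>?E. \<Sum>\<gamma>\<in>{\<gamma>. \<gamma> \<in> paths_to N t j \<and> last \<gamma> = e}. pterm N x w \<gamma>)"
  proof (rule sum.cong[OF refl])
    fix e assume e: "e \<in> ?E"
    obtain s i where si: "esrc N e = (s, i)" by fastforce
    have ok: "edge_ok N e" and de: "edst N e = (t, j)" using e by auto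
    have st: "s < t" using edge_stage[OF ok] si de by simp
    have idim: "i < dim N s" using edge_src_dim[OF ok] si by simp
    have ov: "?ov s i = (if act N s then sqrt 2 * relu (node_val N x w s i) else node_val N x w s i)"
      using st T by (simp add: stage_out_def vals_stable)
    show "ecoef N e * eweight w e * ?ov (fst (esrc N e)) (snd (esrc N e))
        = (\<Sum>\<gamma>\<in>{\<gamma>. \<gamma> \<in> paths_to N t j \<and> last \<gamma> = e}. pterm N x w \<gamma>)"
    proof (cases "s = 0")
      case True
      have set: "{\<gamma>. \<gamma> \<in> paths_to N t j \<and> last \<gamma> = e} = {[e]}"
      proof (intro set_eqI iffI)
        fix \<gamma> assume g: "\<gamma> \<in> {\<gamma>. \<gamma> \<in> paths_to N t j \<and> last \<gamma> = e}"
        then have ne: "\<gamma> \<noteq> []" and lg: "last \<gamma> = e" by (auto simp: paths_to_def)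
        show "\<gamma> \<in> {[e]}"
        proof (cases "butlast \<gamma> = []")
          case True then have "\<gamma> = [e]" using ne lg by (metis append_butlast_last_id append_Nil)
          then show ?thesis by simp
        next
          case False
          have gg: "butlast \<gamma> @ [e] = \<gamma>" using ne lg by (metis append_butlast_last_id)
          have "butlast \<gamma> @ [e] \<in> paths_to N t j" using g by (simp add: gg)
          then have "butlast \<gamma> \<in> paths_to N s i" using snoc_in_paths[OF False] si by simp
          then have "edge_ok N (last (butlast \<gamma>))" "edst N (last (butlast \<gamma>)) = (s, i)"
            using False by (auto simp: paths_to_def)
          then show ?thesis using edge_stage[of N "last (butlast \<gamma>)"] True by simp
        qed
      next
        fix \<gamma> assume "\<gamma> \<in> {[e]}"
        then show "\<gamma> \<in> {\<gamma>. \<gamma> \<in> paths_to N t j \<and> last \<gamma> = e}"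
          using single_in_paths[of e N t j] ok de si True by auto
      qed
      show ?thesis using ov A1 True si by (simp add: set pterm_single node_val_def)
    next
      case False
      have set: "{\<gamma>. \<gamma> \<in> paths_to N t j \<and> last \<gamma> = e} = (\<lambda>\<gamma>. \<gamma> @ [e]) ` paths_to N s i"
      proof (intro set_eqI iffI)
        fix \<gamma> assume g: "\<gamma> \<in> {\<gamma>. \<gamma> \<in> paths_to N t j \<and> last \<gamma> = e}"
        then have ne: "\<gamma> \<noteq> []" and lg: "last \<gamma> = e" by (auto simp: paths_to_def)
        have gg: "butlast \<gamma> @ [e] = \<gamma>" using ne lg by (metis append_butlast_last_id)
        have bne: "butlast \<gamma> \<noteq> []"
        proof
          assume "butlast \<gamma> = []"
          then have "[e] \<in> paths_to N t j" using g gg by auto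
          then show False using single_in_paths[of e N t j] si False by simp
        qed
        have "butlast \<gamma> @ [e] \<in> paths_to N t j" using g by (simp add: gg)
        then have "butlast \<gamma> \<in> paths_to N s i" using snoc_in_paths[OF bne] si by simp
        then show "\<gamma> \<in> (\<lambda>\<gamma>. \<gamma> @ [e]) ` paths_to N s i" using gg by (metis image_eqI)
      next
        fix \<gamma> assume "\<gamma> \<in> (\<lambda>\<gamma>. \<gamma> @ [e]) ` paths_to N s i"
        then obtain \<gamma>' where g': "\<gamma> = \<gamma>' @ [e]" "\<gamma>' \<in> paths_to N s i" by blast
        then have "\<gamma>' \<noteq> []" by (simp add: paths_to_def)
        then show "\<gamma> \<in> {\<gamma>. \<gamma> \<in> paths_to N t j \<and> last \<gamma> = e}"
          using snoc_in_paths[of \<gamma>' e N t j] g' si ok de by simp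
      qed
      have inj: "inj_on (\<lambda>\<gamma>. \<gamma> @ [e]) (paths_to N s i)" by (auto simp: inj_on_def)
      have IH: "node_val N x w s i = (\<Sum>\<gamma>\<in>paths_to N s i. pterm N x w \<gamma>)"
        using less.IH[OF st] False idim by simp
      define F where "F = ecoef N e * eweight w e * (if act N s then sqrt 2 * (if node_val N x w s i > 0 then 1 else 0) else 1)"
      have "(\<Sum>\<gamma>\<in>{\<gamma>. \<gamma> \<in> paths_to N t j \<and> last \<gamma> = e}. pterm N x w \<gamma>)
          = (\<Sum>\<gamma>\<in>paths_to N s i. pterm N x w (\<gamma> @ [e]))"
        unfolding set by (simp add: sum.reindex[OF inj])
      also have "\<dots> = (\<Sum>\<gamma>\<in>paths_to N s i. pterm N x w \<gamma> * F)"
      proof (rule sum.cong[OF refl])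
        fix \<gamma> assume "\<gamma> \<in> paths_to N s i"
        then have "\<gamma> \<noteq> []" "edst N (last \<gamma>) = (s, i)" by (auto simp: paths_to_def)
        from pterm_snoc[OF this] show "pterm N x w (\<gamma> @ [e]) = pterm N x w \<gamma> * F" unfolding F_def .
      qed
      also have "\<dots> = node_val N x w s i * F" by (simp add: IH sum_distrib_right)
      finally show ?thesis using ov si unfolding F_def by (auto simp: relu_def max_def)
    qed
  qed
  also have "\<dots> = (\<Sum>\<gamma>\<in>paths_to N t j. pterm N x w \<gamma>)"
  proof (rule sum.group)
    show "finite (paths_to N t j)" by (rule finite_paths[OF fin])
    show "finite ?E" using finite_edges[OF fin] by (rule finite_subset[rotated]) auto
    show "last ` paths_to N t j \<subseteq> ?E" by (auto simp: paths_to_def)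
  qed
  finally show ?case .
qed



lemma deriv_eq_ev:
  fixes f g :: "real \<Rightarrow> real"
  assumes "eventually (\<lambda>t. f t = g t + K) (nhds x)"
  shows "deriv f x = deriv g x"
proof -
  have "DERIV f x :> D \<longleftrightarrow> DERIV g x :> D" for D
  proof -
    have "DERIV f x :> D \<longleftrightarrow> DERIV (\<lambda>t. g t + K) x :> D"
      by (rule DERIV_cong_ev[OF refl assms refl])
    also have "\<dots> \<longleftrightarrow> DERIV g x :> D"
    proof
      assume "DERIV (\<lambda>t. g t + K) x :> D"
      from DERIV_diff[OF this DERIV_const[of K]] show "DERIV g x :> D" by simp
    next
      assume "DERIV g x :> D"
      from DERIV_add[OF this DERIV_const[of K]] show "DERIV (\<lambda>t. g t + K) x :> D" by simp
    qed
    finally show ?thesis .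
  qed
  then show ?thesis unfolding deriv_def by simp
qed

lemma finite_coords: "finite (mats N) \<Longrightarrow> finite (weight_coords N)"
proof -
  assume fin: "finite (mats N)"
  have "weight_coords N \<subseteq> (\<Union>k\<in>mats N. \<Union>j<dim N (mdst N k). \<Union>i<dim N (msrc N k). {(k, j, i)})"
    unfolding weight_coords_def by auto
  moreover have "finite (\<Union>k\<in>mats N. \<Union>j<dim N (mdst N k). \<Union>i<dim N (msrc N k). {(k, j, i)})"
    using fin by simp
  ultimately show ?thesis by (rule finite_subset)
qed

lemma meas_coord: "(\<lambda>w. w c) \<in> borel_measurable (gauss_weights N)"
proof (cases "c \<in> weight_coords N")
  case True
  have m: "(\<lambda>w. w c) \<in> measurable (gauss_weights N) (density lborel std_normal_density)"
    unfolding gauss_weights_def by (rule measurable_component_singleton[OF True])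
  have eq: "measurable (gauss_weights N) (density lborel std_normal_density) = borel_measurable (gauss_weights N)"
    by (rule measurable_cong_sets) simp_all
  show ?thesis using m unfolding eq .
next
  case False
  have eqw: "w c = undefined" if "w \<in> space (gauss_weights N)" for w
  proof -
    from that have "w \<in> PiE (weight_coords N) (\<lambda>_. space (density lborel std_normal_density))"
      by (simp add: gauss_weights_def space_PiM)
    from PiE_arb[OF this False] show "w c = undefined" .
  qed
  have "(\<lambda>w. undefined :: real) \<in> borel_measurable (gauss_weights N)" by simp
  then show ?thesis using measurable_cong[of "gauss_weights N" "\<lambda>w. w c" "\<lambda>w. undefined :: real" borel] eqw by blast
qed

lemma meas_node_upd[measurable]: "(\<lambda>w. node_val N x (w(c := q)) s j) \<in> borel_measurable (gauss_weights N)"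
  unfolding node_val_def
proof (rule meas_vals)
  fix c' show "(\<lambda>w. (w(c := q)) c') \<in> borel_measurable (gauss_weights N)"
    using meas_coord[of c' N] by (cases "c' = c") simp_all
qed

lemma meas_node[measurable]: "(\<lambda>w. node_val N x w s j) \<in> borel_measurable (gauss_weights N)"
  unfolding node_val_def by (rule meas_vals[where h="\<lambda>w. w"]) (rule meas_coord)

lemma meas_coord'[measurable]: "(\<lambda>w. w c) \<in> borel_measurable (gauss_weights N)"
  by (rule meas_coord)

definition badset :: "'k net \<Rightarrow> (nat \<Rightarrow> real) \<Rightarrow> 'k \<times> nat \<times> nat \<Rightarrow> nat \<Rightarrow> nat \<Rightarrow> 'k weights set" where
  "badset N x c s j = {w \<in> space (gauss_weights N). node_val N x w s j \<le> 0 \<and>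
     (\<forall>n::nat. \<exists>q::rat. \<bar>real_of_rat q - w c\<bar> < 1 / real (Suc n) \<and> node_val N x (w(c := real_of_rat q)) s j > 0)}"

lemma pred1: "Measurable.pred (gauss_weights N) (\<lambda>w. node_val N x w s j \<le> 0)"
  by measurable

lemma pred2: "Measurable.pred (gauss_weights N) (\<lambda>w. \<bar>real_of_rat q - w c\<bar> < 1 / real (Suc n))"
  by measurable

lemma pred3: "Measurable.pred (gauss_weights N) (\<lambda>w. node_val N x (w(c := real_of_rat q)) s j > 0)"
  by measurable

lemma badset_sets: "badset N x c s j \<in> sets (gauss_weights N)"
proof -
  have "Measurable.pred (gauss_weights N) (\<lambda>w. node_val N x w s j \<le> 0 \<and>
     (\<forall>n::nat. \<exists>q::rat. \<bar>real_of_rat q - w c\<bar> < 1 / real (Suc n) \<and> node_val N x (w(c := real_of_rat q)) s j > 0))"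
    using pred1 pred2 pred3 by (intro pred_intros_logic pred_intros_countable) auto
  then show ?thesis unfolding badset_def pred_def .
qed



lemma psf: "product_sigma_finite (\<lambda>_. density lborel std_normal_density)"
  by (intro product_sigma_finite.intro prob_space_imp_sigma_finite prob_space_normal_density) simp

lemma inv_suc_less: "(0::real) < e \<Longrightarrow> \<exists>n::nat. 1 / real (Suc n) < e"
proof -
  assume "0 < e"
  from ex_inverse_of_nat_less[OF this] obtain n :: nat where "n > 0" "inverse (real n) < e" by blast
  moreover have "1 / real (Suc n) \<le> 1 / real n" using \<open>n > 0\<close> by (intro divide_left_mono) auto
  ultimately have "1 / real (Suc n) < e" by (simp add: inverse_eq_divide)
  then show ?thesis by blast
qed

lemma badset_section:
  assumes "v(c := y) \<in> badset N x c s j"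
  shows "y \<in> {t. node_val N x (v(c := t)) s j \<le> 0 \<and>
            (\<forall>e>0. \<exists>t'. \<bar>t' - t\<bar> < e \<and> node_val N x (v(c := t')) s j > 0)}"
proof -
  from assms have h1: "node_val N x (v(c := y)) s j \<le> 0"
    and h2: "\<forall>n::nat. \<exists>q::rat. \<bar>real_of_rat q - y\<bar> < 1 / real (Suc n) \<and> node_val N x (v(c := real_of_rat q)) s j > 0"
    unfolding badset_def by auto
  have "\<exists>t'. \<bar>t' - y\<bar> < e \<and> node_val N x (v(c := t')) s j > 0" if e: "e > 0" for e
  proof -
    obtain n :: nat where n: "1 / real (Suc n) < e" using inv_suc_less[OF e] by blast
    obtain q :: rat where "\<bar>real_of_rat q - y\<bar> < 1 / real (Suc n)" "node_val N x (v(c := real_of_rat q)) s j > 0"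
      using h2 by blast
    then show ?thesis using n by (intro exI[of _ "real_of_rat q"]) auto
  qed
  then show ?thesis using h1 by blast
qed

lemma badset_null:
  assumes fin: "finite (mats N)" and c: "c \<in> weight_coords N"
  shows "badset N x c s j \<in> null_sets (gauss_weights N)"
proof -
  let ?M = "\<lambda>_::('k \<times> nat \<times> nat). density lborel std_normal_density"
  define J where "J = weight_coords N - {c}"
  have IJ: "weight_coords N = insert c J" using c unfolding J_def by auto
  have finJ: "finite J" using finite_coords[OF fin] unfolding J_def by simp
  have cJ: "c \<notin> J" unfolding J_def by simp
  have G: "gauss_weights N = PiM (insert c J) ?M" unfolding gauss_weights_def IJ ..
  define B where "B = badset N x c s j"
  have Bs: "B \<in> sets (gauss_weights N)" unfolding B_def by (rule badset_sets)
  have meas: "indicator B \<in> borel_measurable (PiM (insert c J) ?M)"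
    using Bs unfolding G by (rule borel_measurable_indicator)
  have inner: "(\<integral>\<^sup>+ y. indicator B (v(c := y)) \<partial>?M c) = 0" for v
  proof -
    define C where "C = {t. node_val N x (v(c := t)) s j \<le> 0 \<and>
            (\<forall>e>0. \<exists>t'. \<bar>t' - t\<bar> < e \<and> node_val N x (v(c := t')) s j > 0)}"
    have cC: "countable C" unfolding C_def by (rule pp_bad_countable[OF pp_node_val])
    have "AE y in lborel. y \<notin> C" by (rule AE_not_in[OF countable_imp_null_set_lborel[OF cC]])
    then have "AE y in lborel. 0 < std_normal_density y \<longrightarrow> y \<notin> C" by (rule AE_mp) auto
    then have ae: "AE y in ?M c. y \<notin> C" by (subst AE_density) simp_all
    have "AE y in ?M c. indicator B (v(c := y)) = (0::ennreal)"
    proof (rule AE_mp[OF ae], rule AE_I2, rule impI)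
      fix y assume "y \<notin> C"
      then have "v(c := y) \<notin> B" using badset_section[of v c y N x s j] unfolding B_def C_def by blast
      then show "indicator B (v(c := y)) = (0::ennreal)" by simp
    qed
    then have "(\<integral>\<^sup>+ y. indicator B (v(c := y)) \<partial>?M c) = (\<integral>\<^sup>+ y. 0 \<partial>?M c)"
      by (rule nn_integral_cong_AE)
    then show ?thesis by simp
  qed
  have "emeasure (gauss_weights N) B = (\<integral>\<^sup>+ w. indicator B w \<partial>gauss_weights N)"
    using Bs by simp
  also have "\<dots> = (\<integral>\<^sup>+ v. (\<integral>\<^sup>+ y. indicator B (v(c := y)) \<partial>?M c) \<partial>PiM J ?M)"
    unfolding G by (rule product_sigma_finite.product_nn_integral_insert[OF psf finJ cJ meas])
  also have "\<dots> = 0" by (simp add: inner)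
  finally show ?thesis using Bs unfolding B_def by blast
qed

lemma good_ev:
  assumes nb: "w \<notin> badset N x c s j" and w: "w \<in> space (gauss_weights N)"
  shows "eventually (\<lambda>t. (node_val N x (w(c := t)) s j > 0) = (node_val N x w s j > 0)) (nhds (w c))"
proof -
  define g where "g t = node_val N x (w(c := t)) s j" for t
  have gw: "g (w c) = node_val N x w s j" unfolding g_def by simp
  have cg: "continuous_on UNIV g" using pp_node_val[of N x w c s j] unfolding pp_def g_def by blast
  show ?thesis
  proof (cases "g (w c) > 0")
    case True
    obtain d where d: "d > 0" "\<forall>t'. \<bar>t' - w c\<bar> < d \<longrightarrow> g t' > 0" using cont_pos_nbhd[OF cg True] by blast
    show ?thesis unfolding eventually_nhds_metric
      using d True gw by (intro exI[of _ d]) (auto simp: g_def dist_real_def)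
  next
    case False
    then have le: "node_val N x w s j \<le> 0" using gw by simp
    from nb w le obtain n :: nat where n: "\<forall>q::rat. \<bar>real_of_rat q - w c\<bar> < 1 / real (Suc n) \<longrightarrow> g (real_of_rat q) \<le> 0"
      unfolding badset_def g_def by force
    have "g t \<le> 0" if t: "\<bar>t - w c\<bar> < 1 / real (Suc n)" for t
    proof (rule ccontr)
      assume "\<not> g t \<le> 0"
      then have "g t > 0" by simp
      from cont_pos_nbhd[OF cg this] obtain d where d: "d > 0" "\<forall>t'. \<bar>t' - t\<bar> < d \<longrightarrow> g t' > 0" by blast
      define r where "r = min d (1 / real (Suc n) - \<bar>t - w c\<bar>)"
      have r: "r > 0" unfolding r_def using d t by simp
      obtain qq where qq: "qq \<in> \<rat>" "t - r < qq" "qq < t + r" using Rats_dense_in_real[of "t - r" "t + r"] r by auto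
      from qq(1) obtain q where q: "qq = real_of_rat q" by (cases rule: Rats_cases) auto
      have "\<bar>real_of_rat q - t\<bar> < d" using qq q unfolding r_def by auto
      then have "g (real_of_rat q) > 0" using d by blast
      moreover have "\<bar>real_of_rat q - w c\<bar> < 1 / real (Suc n)" using qq q t unfolding r_def by auto
      ultimately show False using n by force
    qed
    then show ?thesis unfolding eventually_nhds_metric using le
      by (intro exI[of _ "1 / real (Suc n)"]) (auto simp: g_def dist_real_def not_less)
  qed
qed



lemma path_ind_cong:
  assumes "\<forall>y\<in>set (inner_nodes N \<gamma>). (node_val N x w1 (fst y) (snd y) > 0) = (node_val N x w2 (fst y) (snd y) > 0)"
  shows "path_ind N x w1 \<gamma> = path_ind N x w2 \<gamma>"
proof -
  have "(\<forall>(s, j)\<in>set (inner_nodes N \<gamma>). act N s \<longrightarrow> node_val N x w1 s j > 0)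
      = (\<forall>(s, j)\<in>set (inner_nodes N \<gamma>). act N s \<longrightarrow> node_val N x w2 s j > 0)"
  proof (rule ball_cong[OF refl])
    fix y assume y: "y \<in> set (inner_nodes N \<gamma>)"
    obtain s j where sj: "y = (s, j)" by (cases y)
    have "(node_val N x w1 s j > 0) = (node_val N x w2 s j > 0)" using bspec[OF assms y] sj by simp
    then show "(case y of (s, j) \<Rightarrow> act N s \<longrightarrow> node_val N x w1 s j > 0)
        = (case y of (s, j) \<Rightarrow> act N s \<longrightarrow> node_val N x w2 s j > 0)" using sj by simp
  qed
  then show ?thesis unfolding path_ind_def by simp
qed

lemma path_weight_upd:
  assumes "\<not> uses_mat k \<gamma>"
  shows "path_weight (w((k, a, b) := t)) \<gamma> = path_weight w \<gamma>"
proof -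
  have ew: "eweight (w((k, a, b) := t)) e = eweight w e" if e: "e \<in> set \<gamma>" for e
  proof (cases e)
    case (WE k' j i)
    have "k' \<noteq> k"
    proof
      assume "k' = k"
      then have "uses_mat k \<gamma>" using e WE unfolding uses_mat_def by blast
      then show False using assms by simp
    qed
    then show ?thesis using WE by simp
  next
    case (SE r c)
    then show ?thesis by simp
  qed
  have mp: "map (eweight (w((k, a, b) := t))) \<gamma> = map (eweight w) \<gamma>"
  proof (rule map_cong[OF refl])
    fix e assume "e \<in> set \<gamma>"
    then show "eweight (w((k, a, b) := t)) e = eweight w e" by (rule ew)
  qed
  show ?thesis unfolding path_weight_def mp ..
qed

theorem generic:
  fixes N :: "'k net" and x :: "nat \<Rightarrow> real" and k :: 'k and p :: real
  assumes A1: "\<not> act N 0"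
    and A2: "\<forall>(s, t', c)\<in>set (skips N). s < t' \<longrightarrow> dim N s = dim N t'"
    and fin: "finite (mats N)"
    and nst: "0 < nst N" and dout: "0 < dim N (nst N)"
    and k: "k \<in> mats N"
  shows "(\<integral>\<^sup>+ w. ennreal (frob_grad N (net_out N x) k w powr p) \<partial>gauss_weights N)
       = (\<integral>\<^sup>+ w. ennreal (frob_grad N (path_fk N x k) k w powr p) \<partial>gauss_weights N)"
proof -
  let ?G = "gauss_weights N"
  have ae1: "AE w in ?G. (k, j', i') \<in> weight_coords N \<longrightarrow> w \<notin> badset N x (k, j', i') s j" for j' i' s j
  proof (cases "(k, j', i') \<in> weight_coords N")
    case True
    show ?thesis using AE_not_in[OF badset_null[OF fin True]] by (rule AE_mp) auto
  qed simp
  have AE: "AE w in ?G. \<forall>j' i' s j. (k, j', i') \<in> weight_coords N \<longrightarrow> w \<notin> badset N x (k, j', i') s j"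
    by (intro AE_all_countable[THEN iffD2] allI ae1)
  define P where "P = paths_to N (nst N) 0"
  have finP: "finite P" unfolding P_def by (rule finite_paths[OF fin])
  define U where "U = {\<gamma>. uses_mat k \<gamma>}"
  have netout: "net_out N x w' = (\<Sum>\<gamma>\<in>P. pterm N x w' \<gamma>)" for w'
    unfolding net_out_def P_def by (rule decomp[OF A1 A2 fin nst dout])
  have fk: "path_fk N x k w' = (\<Sum>\<gamma>\<in>P \<inter> U. pterm N x w' \<gamma>)" for w'
  proof -
    have "{\<gamma>. is_path N \<gamma> \<and> uses_mat k \<gamma>} = P \<inter> U" unfolding P_def U_def is_path_paths_to by auto
    then show ?thesis unfolding path_fk_def pterm_def by simp
  qed
  have key: "frob_grad N (net_out N x) k w = frob_grad N (path_fk N x k) k w"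
    if w: "w \<in> space ?G" and nb: "\<forall>j' i' s j. (k, j', i') \<in> weight_coords N \<longrightarrow> w \<notin> badset N x (k, j', i') s j" for w
  proof -
    have "pderiv_w (net_out N x) w (k, j', i') = pderiv_w (path_fk N x k) w (k, j', i')"
      if j': "j' < dim N (mdst N k)" and i': "i' < dim N (msrc N k)" for j' i'
    proof -
      define c where "c = (k, j', i')"
      have cI: "c \<in> weight_coords N" unfolding c_def weight_coords_def using k j' i' by simp
      define K where "K = (\<Sum>\<gamma>\<in>P - U. pterm N x w \<gamma>)"
      have ev1: "eventually (\<lambda>t. pterm N x (w(c := t)) \<gamma> = pterm N x w \<gamma>) (nhds (w c))" if g: "\<gamma> \<in> P - U" for \<gamma>
      proof -
        have "\<forall>y\<in>set (inner_nodes N \<gamma>). eventually (\<lambda>t. (node_val N x (w(c := t)) (fst y) (snd y) > 0)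
              = (node_val N x w (fst y) (snd y) > 0)) (nhds (w c))"
        proof
          fix y assume "y \<in> set (inner_nodes N \<gamma>)"
          have "w \<notin> badset N x c (fst y) (snd y)" using nb cI unfolding c_def by blast
          then show "eventually (\<lambda>t. (node_val N x (w(c := t)) (fst y) (snd y) > 0)
              = (node_val N x w (fst y) (snd y) > 0)) (nhds (w c))" by (rule good_ev[OF _ w])
        qed
        then have "eventually (\<lambda>t. \<forall>y\<in>set (inner_nodes N \<gamma>). (node_val N x (w(c := t)) (fst y) (snd y) > 0)
              = (node_val N x w (fst y) (snd y) > 0)) (nhds (w c))"
          by (intro eventually_ball_finite) auto
        then show ?thesis
        proof (rule eventually_mono)
          fix t assume "\<forall>y\<in>set (inner_nodes N \<gamma>). (node_val N x (w(c := t)) (fst y) (snd y) > 0)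
              = (node_val N x w (fst y) (snd y) > 0)"
          then have "path_ind N x (w(c := t)) \<gamma> = path_ind N x w \<gamma>" by (rule path_ind_cong)
          moreover have "path_weight (w(c := t)) \<gamma> = path_weight w \<gamma>"
            unfolding c_def by (rule path_weight_upd) (use g in \<open>simp add: U_def\<close>)
          ultimately show "pterm N x (w(c := t)) \<gamma> = pterm N x w \<gamma>" unfolding pterm_def by simp
        qed
      qed
      have "eventually (\<lambda>t. \<forall>\<gamma>\<in>P - U. pterm N x (w(c := t)) \<gamma> = pterm N x w \<gamma>) (nhds (w c))"
        using ev1 finP by (intro eventually_ball_finite) auto
      then have ev: "eventually (\<lambda>t. net_out N x (w(c := t)) = path_fk N x k (w(c := t)) + K) (nhds (w c))"
      proof (rule eventually_mono)
        fix t assume h: "\<forall>\<gamma>\<in>P - U. pterm N x (w(c := t)) \<gamma> = pterm N x w \<gamma>"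
        have "net_out N x (w(c := t)) = (\<Sum>\<gamma>\<in>P \<inter> U. pterm N x (w(c := t)) \<gamma>) + (\<Sum>\<gamma>\<in>P - U. pterm N x (w(c := t)) \<gamma>)"
          unfolding netout by (rule sum.Int_Diff[OF finP])
        also have "(\<Sum>\<gamma>\<in>P - U. pterm N x (w(c := t)) \<gamma>) = K" unfolding K_def using h by (intro sum.cong) auto
        finally show "net_out N x (w(c := t)) = path_fk N x k (w(c := t)) + K" unfolding fk .
      qed
      show ?thesis unfolding pderiv_w_def c_def[symmetric] by (rule deriv_eq_ev[OF ev])
    qed
    then show ?thesis unfolding frob_grad_def by simp
  qed
  show ?thesis
  proof (rule nn_integral_cong_AE)
    have "AE w in ?G. frob_grad N (net_out N x) k w = frob_grad N (path_fk N x k) k w"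
      using AE AE_space by eventually_elim (rule key)
    then show "AE w in ?G. ennreal (frob_grad N (net_out N x) k w powr p) = ennreal (frob_grad N (path_fk N x k) k w powr p)"
      by eventually_elim simp
  qed
qed



lemma res_dim: "dim (resnet_net d n0 nn m \<alpha> L) s = (if s = 0 then d else if s = 2 + L * (m + 1) then 1
   else (if (s - 1) mod (m + 1) = 0 \<or> (s - 1) mod (m + 1) = m then n0 else nn ((s - 1) div (m + 1)) ((s - 1) mod (m + 1))))"
  unfolding resnet_net_def Let_def by (simp only: net.select_convs)

lemma res_dim_y:
  assumes "l' \<le> L"
  shows "dim (resnet_net d n0 nn m \<alpha> L) (res_ystage m l') = n0"
proof -
  have "l' * (m + 1) \<le> L * (m + 1)" using assms by (rule mult_le_mono1)
  then have s1: "res_ystage m l' \<noteq> 2 + L * (m + 1)" unfolding res_ystage_def by linarith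
  have s0: "res_ystage m l' \<noteq> 0" unfolding res_ystage_def by simp
  have e: "res_ystage m l' - 1 = l' * (m + 1)" unfolding res_ystage_def by simp
  have s2: "(res_ystage m l' - 1) mod (m + 1) = 0" unfolding e by (rule mod_mult_self2_is_0)
  show ?thesis by (simp only: res_dim s0 s1 s2 if_False if_True simp_thms)
qed

lemma res_dim_h:
  assumes "1 \<le> l" "l \<le> L"
  shows "dim (resnet_net d n0 nn m \<alpha> L) (res_hstage m l m) = n0"
proof -
  have "(l - 1) * (m + 1) \<le> (L - 1) * (m + 1)" using assms by (intro mult_le_mono1 diff_le_mono)
  moreover have "(L - 1) * (m + 1) + (m + 1) = L * (m + 1)" using assms
    by (cases L) auto
  ultimately have s1: "res_hstage m l m \<noteq> 2 + L * (m + 1)" unfolding res_hstage_def by linarith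
  have s0: "res_hstage m l m \<noteq> 0" unfolding res_hstage_def by simp
  have e: "res_hstage m l m - 1 = (l - 1) * (m + 1) + m" unfolding res_hstage_def by simp
  have s2: "(res_hstage m l m - 1) mod (m + 1) = m" unfolding e mod_mult_self3 by simp
  show ?thesis by (simp only: res_dim s0 s1 s2 if_False if_True simp_thms)
qed

lemma res_A2:
  "\<forall>(s, t', c)\<in>set (skips (resnet_net d n0 nn m \<alpha> L)). s < t' \<longrightarrow>
      dim (resnet_net d n0 nn m \<alpha> L) s = dim (resnet_net d n0 nn m \<alpha> L) t'"
proof
  fix st assume "st \<in> set (skips (resnet_net d n0 nn m \<alpha> L))"
  then have "st \<in> (\<Union>l\<in>set [1..<L+1]. set [(res_ystage m (l - 1), res_ystage m l, 1),
                                (res_hstage m l m, res_ystage m l, sqrt (\<alpha> l))])"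
    unfolding resnet_net_def net.select_convs set_concat set_map by blast
  then obtain l where l: "l \<in> set [1..<L+1]"
    and st: "st \<in> set [(res_ystage m (l - 1), res_ystage m l, 1), (res_hstage m l m, res_ystage m l, sqrt (\<alpha> l))]"
    by blast
  have l1: "1 \<le> l" "l \<le> L" using l by auto
  have d1: "dim (resnet_net d n0 nn m \<alpha> L) (res_ystage m (l - 1)) = n0" by (rule res_dim_y) (use l1 in simp)
  have d2: "dim (resnet_net d n0 nn m \<alpha> L) (res_ystage m l) = n0" by (rule res_dim_y) (use l1 in simp)
  have d3: "dim (resnet_net d n0 nn m \<alpha> L) (res_hstage m l m) = n0" by (rule res_dim_h[OF l1])
  from st have "st = (res_ystage m (l - 1), res_ystage m l, 1) \<or> st = (res_hstage m l m, res_ystage m l, sqrt (\<alpha> l))"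
    by simp
  then show "case st of (s, t', c) \<Rightarrow> s < t' \<longrightarrow> dim (resnet_net d n0 nn m \<alpha> L) s = dim (resnet_net d n0 nn m \<alpha> L) t'"
  proof
    assume "st = (res_ystage m (l - 1), res_ystage m l, 1)"
    then show ?thesis using d1 d2 by simp
  next
    assume "st = (res_hstage m l m, res_ystage m l, sqrt (\<alpha> l))"
    then show ?thesis using d3 d2 by simp
  qed
qed

theorem lemma3:
  fixes N :: "lbl net" and d L :: nat and x :: "nat \<Rightarrow> real" and k :: lbl and p :: real
  assumes arch:
    "(\<exists>n. (\<forall>l\<le>L. 0 < n l) \<and> N = vanilla_net d n L)
     \<or> (\<exists>n0 nn m \<alpha>. 0 < n0 \<and> 1 \<le> m \<and> (\<forall>l<L. \<forall>h. 1 \<le> h \<and> h < m \<longrightarrow> 0 < nn l h)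
           \<and> (\<forall>l. 1 \<le> l \<and> l \<le> L \<longrightarrow> 0 < \<alpha> l) \<and> 1 \<le> L \<and> N = resnet_net d n0 nn m \<alpha> L)
     \<or> (\<exists>n \<alpha>. (\<forall>l\<le>L. 0 < n l) \<and> 0 < \<alpha> \<and> 1 \<le> L \<and> N = densenet_net d n \<alpha> L)"
    and "0 < d"
    and x_nz: "\<exists>i<d. x i \<noteq> 0"
    and k: "k \<in> mats N"
    and p: "0 < p"
  shows "(\<integral>\<^sup>+ w. ennreal (frob_grad N (net_out N x) k w powr p) \<partial>gauss_weights N)
       = (\<integral>\<^sup>+ w. ennreal (frob_grad N (path_fk N x k) k w powr p) \<partial>gauss_weights N)"
proof -
  have props: "\<not> act N 0 \<and> (\<forall>(s, t', c)\<in>set (skips N). s < t' \<longrightarrow> dim N s = dim N t')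
      \<and> finite (mats N) \<and> 0 < nst N \<and> 0 < dim N (nst N)"
    using arch
  proof (elim disjE exE conjE)
    fix n assume N: "N = vanilla_net d n L"
    show ?thesis unfolding N by (simp add: vanilla_net_def)
  next
    fix n0 nn m \<alpha> assume N: "N = resnet_net d n0 nn m \<alpha> L"
    have fin: "finite (mats N)"
    proof -
      have "mats N \<subseteq> {W1 0, W1 L} \<union> (\<lambda>(l, h). W2 l h) ` ({..L} \<times> {..m})"
        unfolding N resnet_net_def by auto
      then show ?thesis by (rule finite_subset) simp
    qed
    show ?thesis using fin res_A2[of d n0 nn m \<alpha> L] unfolding N by (simp add: resnet_net_def)
  next
    fix n \<alpha> assume N: "N = densenet_net d n \<alpha> L"
    have fin: "finite (mats N)"
    proof -
      have "mats N \<subseteq> {W1 0, W1 L} \<union> (\<lambda>(l, h). W2 l h) ` ({..L} \<times> {..L})"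
        unfolding N densenet_net_def by auto
      then show ?thesis by (rule finite_subset) simp
    qed
    show ?thesis using fin unfolding N by (simp add: densenet_net_def)
  qed
  then have A1: "\<not> act N 0" and A2: "\<forall>(s, t', c)\<in>set (skips N). s < t' \<longrightarrow> dim N s = dim N t'"
    and fin: "finite (mats N)" and nst: "0 < nst N" and dout: "0 < dim N (nst N)" by blast+
  show ?thesis by (rule generic[OF A1 A2 fin nst dout k])
qed

end
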